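(* Let $(G,\delta)$ be a nilpotent $\mathbb Q$-scalable group of step $s$ that is generated as a group by $\{\delta_q(x_i):q\in\mathbb Q,1\le i\le r\}$ for some $x_1,\dots,x_r\in V_1(G)$. Then the abelian group $G^{(s)}$ is a $\mathbb Q$-vector space (with the group product as addition), where for $s=1$ the scalar multiplication is $\sigma_q=\delta_q$, and for $s\ge2$ the scalar multiplication is the well-defined map $\sigma_{n/m}(z):=\delta_m^{-1}\big(z^{n m^{s-1}}\big)$ ($n\in\mathbb Z$, $m\in\mathbb N$). Moreover, if $s\ge 2$ and $z=[x,w]\in G^{(s)}$ with $x\in V_1(G)$ and $w\in G^{(s-1)}$, then $\sigma_q(z)=[\delta_q(x),w]$ for all $q\in\mathbb Q$.
   Context: A $\mathbb Q$-scalable group is a group $G$ with a map $\delta\colon\mathbb Q\times G\to G$ such that $\delta_\lambda$ is an automorphism for $\lambda\ne0$, $\delta_\lambda\circ\delta_\mu=\delta_{\lambda\mu}$ for $\lambda,\mu\in\mathbb Q$, and $\delta_0\equiv e_G$. $V_1(G):=\{p:\delta_{t+s}(p)=\delta_t(p)\delta_s(p)\ \forall t,s\in\mathbb Q\}$. $[g,h]=ghg^{-1}h^{-1}$; $G^{(1)}=G$, $G^{(k)}=\langle[G,G^{(k-1)}]\rangle$; step $s$ means $G^{(s+1)}=\{e\}\ne G^{(s)}$. A $\mathbb Q$-vector space structure on an abelian group $G$ is a map $\sigma\colon\mathbb Q\times G\to G$ with $\sigma_q\sigma_p=\sigma_{qp}$, $\sigma_q(g)\sigma_p(g)=\sigma_{q+p}(g)$,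 $\sigma_1=\mathrm{id}$, $\sigma_q(g)\sigma_q(h)=\sigma_q(gh)$. *)

theory Defs
  imports "HOL-Algebra.Algebra"
begin

definition Q_scalable :: "('a, 'b) monoid_scheme \<Rightarrow> (rat \<Rightarrow> 'a \<Rightarrow> 'a) \<Rightarrow> bool" where
  "Q_scalable G \<delta> \<longleftrightarrow> group G
     \<and> (\<forall>a. a \<noteq> 0 \<longrightarrow> \<delta> a \<in> iso G G)
     \<and> (\<forall>a b. \<forall>x \<in> carrier G. \<delta> a (\<delta> b x) = \<delta> (a * b) x)
     \<and> (\<forall>x \<in> carrier G. \<delta> 0 x = \<one>\<^bsub>G\<^esub>)"

definition V1 :: "('a, 'b) monoid_scheme \<Rightarrow> (rat \<Rightarrow> 'a \<Rightarrow> 'a) \<Rightarrow> 'a set" where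
  "V1 G \<delta> = {p \<in> carrier G. \<forall>t s. \<delta> (t + s) p = \<delta> t p \<otimes>\<^bsub>G\<^esub> \<delta> s p}"

definition commutator :: "('a, 'b) monoid_scheme \<Rightarrow> 'a \<Rightarrow> 'a \<Rightarrow> 'a" where
  "commutator G g h = g \<otimes>\<^bsub>G\<^esub> h \<otimes>\<^bsub>G\<^esub> inv\<^bsub>G\<^esub> g \<otimes>\<^bsub>G\<^esub> inv\<^bsub>G\<^esub> h"

text \<open>Lower central series, indexed as in the paper: \<open>lcs G k = G^(k)\<close> for \<open>k \<ge> 1\<close>
  (index 0 is a junk value equal to the carrier).\<close>
fun lcs :: "('a, 'b) monoid_scheme \<Rightarrow> nat \<Rightarrow> 'a set" where
  "lcs G 0 = carrier G"
| "lcs G (Suc 0) = carrier G"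
| "lcs G (Suc (Suc k)) =
     generate G {commutator G g h | g h. g \<in> carrier G \<and> h \<in> lcs G (Suc k)}"

definition nilpotent_step :: "('a, 'b) monoid_scheme \<Rightarrow> nat \<Rightarrow> bool" where
  "nilpotent_step G s \<longleftrightarrow> 1 \<le> s \<and> lcs G (Suc s) = {\<one>\<^bsub>G\<^esub>} \<and> lcs G s \<noteq> {\<one>\<^bsub>G\<^esub>}"

definition Q_vector_space_structure ::
  "('a, 'b) monoid_scheme \<Rightarrow> 'a set \<Rightarrow> (rat \<Rightarrow> 'a \<Rightarrow> 'a) \<Rightarrow> bool" where
  "Q_vector_space_structure G H \<sigma> \<longleftrightarrow>
     (\<forall>q. \<forall>g \<in> H. \<sigma> q g \<in> H)
     \<and> (\<forall>q p. \<forall>g \<in> H. \<sigma> q (\<sigma> p g) = \<sigma> (q * p) g)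
     \<and> (\<forall>q p. \<forall>g \<in> H. \<sigma> q g \<otimes>\<^bsub>G\<^esub> \<sigma> p g = \<sigma> (q + p) g)
     \<and> (\<forall>g \<in> H. \<sigma> 1 g = g)
     \<and> (\<forall>q. \<forall>g \<in> H. \<forall>h \<in> H. \<sigma> q g \<otimes>\<^bsub>G\<^esub> \<sigma> q h = \<sigma> q (g \<otimes>\<^bsub>G\<^esub> h))"

definition sigma_raw :: "('a, 'b) monoid_scheme \<Rightarrow> (rat \<Rightarrow> 'a \<Rightarrow> 'a) \<Rightarrow> nat \<Rightarrow> int \<Rightarrow> int \<Rightarrow> 'a \<Rightarrow> 'a" where
  "sigma_raw G \<delta> s n m z =
     inv_into (carrier G) (\<delta> (of_int m)) (z [^]\<^bsub>G\<^esub> (n * m ^ (s - 1)))"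

definition sigma :: "('a, 'b) monoid_scheme \<Rightarrow> (rat \<Rightarrow> 'a \<Rightarrow> 'a) \<Rightarrow> nat \<Rightarrow> rat \<Rightarrow> 'a \<Rightarrow> 'a" where
  "sigma G \<delta> s q z =
     (if s = 1 then \<delta> q z
      else (case quotient_of q of (n, m) \<Rightarrow> sigma_raw G \<delta> s n m z))"

end

theory Submission
  imports Defs
begin



context group begin

lemma cancel_l1[simp]: "x \<in> carrier G \<Longrightarrow> y \<in> carrier G \<Longrightarrow> inv x \<otimes> (x \<otimes> y) = y"
  by (simp add: m_assoc[symmetric])
lemma cancel_l2[simp]: "x \<in> carrier G \<Longrightarrow> y \<in> carrier G \<Longrightarrow> x \<otimes> (inv x \<otimes> y) = y"
  by (simp add: m_assoc[symmetric])

lemma comm_closed[simp]: "g \<in> carrier G \<Longrightarrow> h \<in> carrier G \<Longrightarrow> commutator G g h \<in> carrier G"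
  by (simp add: commutator_def)

lemma comm_one_imp: "g \<in> carrier G \<Longrightarrow> h \<in> carrier G \<Longrightarrow> commutator G g h = \<one> \<Longrightarrow> g \<otimes> h = h \<otimes> g"
  unfolding commutator_def
  by (metis inv_closed m_closed inv_solve_right l_one inv_inv m_assoc)

lemma comm_one_if: "g \<in> carrier G \<Longrightarrow> h \<in> carrier G \<Longrightarrow> g \<otimes> h = h \<otimes> g \<Longrightarrow> commutator G g h = \<one>"
  unfolding commutator_def
  by (simp add: m_assoc [symmetric]) (metis inv_closed m_assoc r_inv r_one)

lemma comm_mult_left: "x \<in> carrier G \<Longrightarrow> y \<in> carrier G \<Longrightarrow> h \<in> carrier G \<Longrightarrow>
  commutator G (x \<otimes> y) h = x \<otimes> commutator G y h \<otimes> inv x \<otimes> commutator G x h"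
  unfolding commutator_def by (simp add: m_assoc inv_mult_group)

lemma comm_mult_right: "g \<in> carrier G \<Longrightarrow> x \<in> carrier G \<Longrightarrow> y \<in> carrier G \<Longrightarrow>
  commutator G g (x \<otimes> y) = commutator G g x \<otimes> x \<otimes> commutator G g y \<otimes> inv x"
  unfolding commutator_def by (simp add: m_assoc inv_mult_group)

lemma conj_comm: "x \<in> carrier G \<Longrightarrow> z \<in> carrier G \<Longrightarrow> x \<otimes> z = z \<otimes> x \<Longrightarrow> x \<otimes> z \<otimes> inv x = z"
  by (metis inv_closed m_assoc r_inv r_one)

lemma comm_pow_left:
  assumes g: "g \<in> carrier G" and h: "h \<in> carrier G"
    and c: "g \<otimes> commutator G g h = commutator G g h \<otimes> g"
  shows "commutator G (g [^] (n::nat)) h = commutator G g h [^] n"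
proof (induction n)
  case 0 then show ?case using h by (simp add: comm_one_if)
next
  case (Suc n)
  have "commutator G (g [^] Suc n) h = commutator G (g \<otimes> g [^] n) h"
    using g by (simp only: nat_pow_Suc2)
  also have "\<dots> = g \<otimes> commutator G g h [^] n \<otimes> inv g \<otimes> commutator G g h"
    using g h Suc by (simp add: comm_mult_left)
  also have "g \<otimes> commutator G g h [^] n \<otimes> inv g = commutator G g h [^] n"
    using g h c by (intro conj_comm) (auto simp: group_commutes_pow)
  finally show ?case by simp
qed

lemma comm_pow_right:
  assumes g: "g \<in> carrier G" and h: "h \<in> carrier G"
    and c: "h \<otimes> commutator G g h = commutator G g h \<otimes> h"
  shows "commutator G g (h [^] (n::nat)) = commutator G g h [^] n"
proof (induction n)
  case 0 then show ?case using g by (simp add: comm_one_if)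
next
  case (Suc n)
  have "commutator G g (h [^] Suc n) = commutator G g (h [^] n \<otimes> h)"
    using h by simp
  also have "\<dots> = commutator G g h [^] n \<otimes> (h [^] n \<otimes> commutator G g h \<otimes> inv (h [^] n))"
    using g h Suc by (simp add: comm_mult_right m_assoc)
  also have "h [^] n \<otimes> commutator G g h \<otimes> inv (h [^] n) = commutator G g h"
    using g h c by (intro conj_comm) (auto simp: group_commutes_pow)
  finally show ?case using g h by simp
qed

lemma comm_central_right:
  assumes g: "g \<in> carrier G" and h: "h \<in> carrier G" and c: "c \<in> carrier G"
    and cg: "g \<otimes> c = c \<otimes> g" and cc: "c \<otimes> commutator G g h = commutator G g h \<otimes> c"
  shows "commutator G g (c \<otimes> h) = commutator G g h"
proof -
  have "commutator G g (c \<otimes> h) = commutator G g c \<otimes> (c \<otimes> commutator G g h \<otimes> inv c)"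
    using assms by (simp add: comm_mult_right m_assoc)
  also have "commutator G g c = \<one>" using comm_one_if g c cg by blast
  also have "c \<otimes> commutator G g h \<otimes> inv c = commutator G g h"
    using assms by (intro conj_comm) auto
  finally show ?thesis using assms by simp
qed

lemma comm_inv_left:
  assumes g: "g \<in> carrier G" and h: "h \<in> carrier G"
    and c: "g \<otimes> commutator G g h = commutator G g h \<otimes> g"
  shows "commutator G (inv g) h = inv (commutator G g h)"
proof -
  have "\<one> = commutator G (g \<otimes> inv g) h" using h g by (simp add: comm_one_if)
  also have "\<dots> = g \<otimes> commutator G (inv g) h \<otimes> inv g \<otimes> commutator G g h"
    using g h by (intro comm_mult_left) auto
  finally have e: "\<one> = g \<otimes> commutator G (inv g) h \<otimes> inv g \<otimes> commutator G g h" .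
  show ?thesis
  proof -
    have "g \<otimes> commutator G (inv g) h \<otimes> inv g = inv (commutator G g h)"
      using e g h by (metis comm_closed inv_closed m_closed inv_equality)
    hence "commutator G (inv g) h = inv g \<otimes> inv (commutator G g h) \<otimes> g"
      using g h by (metis comm_closed inv_closed m_closed inv_solve_left inv_solve_right m_assoc)
    also have "\<dots> = inv (commutator G g h)"
      using g h c by (metis comm_closed inv_closed inv_inv conj_comm inv_mult_group m_assoc)
    finally show ?thesis .
  qed
qed

end

context group begin

lemma lcs_sub: "lcs G k \<subseteq> carrier G"
proof (induction k rule: less_induct)
  case (less k)
  show ?case
  proof (cases k)
    case (Suc j)
    show ?thesis
    proof (cases j)
      case (Suc i)
      have "{commutator G g h | g h. g \<in> carrier G \<and> h \<in> lcs G (Suc i)} \<subseteq> carrier G"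
        using less[of "Suc i"] Suc \<open>k = Suc j\<close> by auto
      then show ?thesis using \<open>k = Suc j\<close> Suc by (simp add: generate_incl)
    qed (simp add: \<open>k = Suc j\<close>)
  qed simp
qed

lemma lcs_Suc: "1 \<le> j \<Longrightarrow> lcs G (Suc j) = generate G {commutator G g h | g h. g \<in> carrier G \<and> h \<in> lcs G j}"
  by (cases j) auto

lemma lcs_subgroup: "subgroup (lcs G k) G"
proof (cases "k \<le> 1")
  case True
  then have "lcs G k = carrier G" by (cases k) (auto simp: le_Suc_eq)
  then show ?thesis by (simp add: subgroup_self)
next
  case False
  then obtain j where j: "k = Suc j" "1 \<le> j" by (cases k) auto
  have "{commutator G g h | g h. g \<in> carrier G \<and> h \<in> lcs G j} \<subseteq> carrier G"
    using lcs_sub[of j] by auto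
  then show ?thesis using j lcs_Suc by (simp add: generate_is_subgroup)
qed

lemma lcs_carrier: "u \<in> lcs G k \<Longrightarrow> u \<in> carrier G"
  using lcs_sub by blast

lemma lcs_comm: "1 \<le> j \<Longrightarrow> g \<in> carrier G \<Longrightarrow> u \<in> lcs G j \<Longrightarrow> commutator G g u \<in> lcs G (Suc j)"
  by (simp add: lcs_Suc del: lcs.simps) (rule generate.incl, blast)

lemma lcs_dec: "lcs G (Suc j) \<subseteq> lcs G j"
proof (induction j)
  case 0 then show ?case by simp
next
  case (Suc j)
  show ?case
  proof (cases j)
    case 0 then show ?thesis using lcs_sub[of 2] by (simp add: numeral_2_eq_2)
  next
    case (Suc i)
    have "{commutator G g h | g h. g \<in> carrier G \<and> h \<in> lcs G (Suc j)}
      \<subseteq> {commutator G g h | g h. g \<in> carrier G \<and> h \<in> lcs G j}"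
      using Suc.IH by blast
    then show ?thesis using Suc lcs_Suc[of "Suc j"] lcs_Suc[of j]
      by (simp del: lcs.simps add: mono_generate)
  qed
qed

lemma lcs_normal: "lcs G j \<lhd> G"
  unfolding normal_inv_iff
proof (intro conjI ballI lcs_subgroup)
  fix x h assume x: "x \<in> carrier G" and h: "h \<in> lcs G j"
  have hc: "h \<in> carrier G" using h lcs_carrier by blast
  show "x \<otimes> h \<otimes> inv x \<in> lcs G j"
  proof (cases "j = 0")
    case True then show ?thesis using x hc by simp
  next
    case False
    have "commutator G x h \<in> lcs G j" using lcs_comm[of j x h] False x h lcs_dec by auto
    moreover have "x \<otimes> h \<otimes> inv x = commutator G x h \<otimes> h"
      using x hc by (simp add: commutator_def m_assoc)
    ultimately show ?thesis using h subgroup.m_closed[OF lcs_subgroup] by metis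
  qed
qed

lemma gen_image:
  assumes "group_hom G G \<phi>" "S \<subseteq> carrier G" "t \<in> generate G S"
  shows "\<phi> t \<in> generate G (\<phi> ` S)"
  using assms(3)
proof induction
  case one then show ?case using group_hom.hom_one[OF assms(1)] generate.one by metis
next
  case (incl h) then show ?case by (simp add: generate.incl)
next
  case (inv h) then show ?case using group_hom.hom_inv[OF assms(1)] assms(2) generate.inv
    by (metis image_eqI subsetD)
next
  case (eng h1 h2)
  have "h1 \<in> carrier G" "h2 \<in> carrier G" using eng.hyps generate_in_carrier assms(2) by blast+
  then show ?case using group_hom.hom_mult[OF assms(1)] eng generate.eng by metis
qed

lemma hom_comm: "group_hom G G \<phi> \<Longrightarrow> g \<in> carrier G \<Longrightarrow> h \<in> carrier G \<Longrightarrow>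
   \<phi> (commutator G g h) = commutator G (\<phi> g) (\<phi> h)"
  unfolding commutator_def by (simp add: group_hom.hom_mult group_hom.hom_inv)

lemma lcs_hom: "group_hom G G \<phi> \<Longrightarrow> u \<in> lcs G j \<Longrightarrow> \<phi> u \<in> lcs G j"
proof (induction j arbitrary: u)
  case 0 then show ?case using group_hom.hom_closed by fastforce
next
  case (Suc j)
  show ?case
  proof (cases j)
    case 0 then show ?thesis using Suc.prems group_hom.hom_closed by fastforce
  next
    case (Suc i)
    define S where "S = {commutator G g h | g h. g \<in> carrier G \<and> h \<in> lcs G j}"
    have S: "S \<subseteq> carrier G" using lcs_carrier unfolding S_def by auto
    have e: "lcs G (Suc j) = generate G S" using Suc lcs_Suc[of j] S_def by simp
    have "\<phi> ` S \<subseteq> S"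
    proof
      fix y assume "y \<in> \<phi> ` S"
      then obtain g h where "y = \<phi> (commutator G g h)" "g \<in> carrier G" "h \<in> lcs G j"
        unfolding S_def by blast
      then show "y \<in> S" unfolding S_def
        using hom_comm[OF Suc.prems(1)] Suc.IH[OF Suc.prems(1)] lcs_carrier
          group_hom.hom_closed[OF Suc.prems(1)] by blast
    qed
    then show ?thesis using gen_image[OF Suc.prems(1) S] Suc.prems(2) e mono_generate by blast
  qed
qed

end

context group begin

lemma mod_hom: "K \<lhd> G \<Longrightarrow> group_hom G (G Mod K) (\<lambda>a. K #> a)"
  by (simp add: group_hom.intro group_hom_axioms.intro is_group normal.factorgroup_is_group
      normal.r_coset_hom_Mod)

lemma mod_one: "K \<lhd> G \<Longrightarrow> a \<in> K \<Longrightarrow> K #> a = \<one>\<^bsub>G Mod K\<^esub>"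
  by (simp add: normal_imp_subgroup subgroup.rcos_const is_group)

lemma mod_eq_iff: "K \<lhd> G \<Longrightarrow> a \<in> carrier G \<Longrightarrow> b \<in> carrier G \<Longrightarrow>
   (K #> a = K #> b) \<longleftrightarrow> a \<otimes> inv b \<in> K"
proof -
  assume K: "K \<lhd> G" and a: "a \<in> carrier G" and b: "b \<in> carrier G"
  have sK: "subgroup K G" using K normal_imp_subgroup by blast
  show ?thesis
  proof
    assume e: "K #> a = K #> b"
    have "a \<in> K #> b" using rcos_self[OF a sK] e by simp
    then show "a \<otimes> inv b \<in> K" using subgroup.rcos_module_imp[OF sK is_group b] by blast
  next
    assume "a \<otimes> inv b \<in> K"
    then have "a \<in> K #> b" using subgroup.rcos_module_rev[OF sK is_group b a] by blast
    then show "K #> a = K #> b" using repr_independence[OF _ b sK] by simp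
  qed
qed

lemma mod_carrier: "carrier (G Mod K) = (\<lambda>a. K #> a) ` carrier G"
  by (auto simp: FactGroup_def RCOSETS_def)

lemma mod_comm: "K \<lhd> G \<Longrightarrow> a \<in> carrier G \<Longrightarrow> b \<in> carrier G \<Longrightarrow>
  K #> commutator G a b = commutator (G Mod K) (K #> a) (K #> b)"
  using group_hom.hom_mult[OF mod_hom] group_hom.hom_inv[OF mod_hom]
  unfolding commutator_def by simp

lemma mod_central:
  assumes K: "K \<lhd> G" and u: "u \<in> carrier G" and c: "\<And>x. x \<in> carrier G \<Longrightarrow> commutator G x u \<in> K"
    and y: "y \<in> carrier (G Mod K)"
  shows "y \<otimes>\<^bsub>G Mod K\<^esub> (K #> u) = (K #> u) \<otimes>\<^bsub>G Mod K\<^esub> y"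
proof -
  interpret Q: group "G Mod K" using K normal.factorgroup_is_group by blast
  obtain x where x: "x \<in> carrier G" "y = K #> x" using y mod_carrier by auto
  have "commutator (G Mod K) y (K #> u) = \<one>\<^bsub>G Mod K\<^esub>"
    using mod_comm[OF K x(1) u] mod_one[OF K c[OF x(1)]] x by simp
  then show ?thesis using Q.comm_one_imp y group_hom.hom_closed[OF mod_hom[OF K] u] by blast
qed

end

locale qs = group G for G (structure) + fixes \<delta> :: "rat \<Rightarrow> 'a \<Rightarrow> 'a"
  assumes qsc: "Q_scalable G \<delta>"
begin

lemma d_iso: "q \<noteq> 0 \<Longrightarrow> \<delta> q \<in> iso G G"
  using qsc unfolding Q_scalable_def by blast

lemma d_hom: "q \<noteq> 0 \<Longrightarrow> group_hom G G (\<delta> q)"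
proof -
  assume q: "q \<noteq> 0"
  have "\<delta> q \<in> hom G G" using d_iso[OF q] unfolding iso_def by blast
  then show ?thesis by (intro group_hom.intro group_hom_axioms.intro is_group)
qed

lemma d_inj: "q \<noteq> 0 \<Longrightarrow> inj_on (\<delta> q) (carrier G)"
proof -
  assume q: "q \<noteq> 0"
  show ?thesis using d_iso[OF q] unfolding iso_def bij_betw_def by blast
qed

lemma d_comp: "x \<in> carrier G \<Longrightarrow> \<delta> a (\<delta> b x) = \<delta> (a * b) x"
  using qsc unfolding Q_scalable_def by blast

lemma d_zero: "x \<in> carrier G \<Longrightarrow> \<delta> 0 x = \<one>"
  using qsc unfolding Q_scalable_def by blast

lemma d_carrier[simp]: "x \<in> carrier G \<Longrightarrow> \<delta> q x \<in> carrier G"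
proof -
  assume x: "x \<in> carrier G"
  show ?thesis
  proof (cases "q = 0")
    case True then show ?thesis using x d_zero by simp
  next
    case False then show ?thesis using x group_hom.hom_closed[OF d_hom[OF False]] by blast
  qed
qed

lemma d_id[simp]: "x \<in> carrier G \<Longrightarrow> \<delta> 1 x = x"
proof -
  assume x: "x \<in> carrier G"
  have "\<delta> 1 (\<delta> 1 x) = \<delta> 1 x" using d_comp[OF x, of 1 1] by simp
  then show ?thesis using inj_onD[OF d_inj[of 1]] x d_carrier[OF x, of 1] by simp
qed

lemma d_mult: "x \<in> carrier G \<Longrightarrow> y \<in> carrier G \<Longrightarrow> \<delta> q (x \<otimes> y) = \<delta> q x \<otimes> \<delta> q y"
  by (cases "q = 0") (auto simp: d_zero group_hom.hom_mult[OF d_hom])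

lemma d_one[simp]: "\<delta> q \<one> = \<one>"
  by (cases "q = 0") (auto simp: d_zero group_hom.hom_one[OF d_hom])

lemma d_inv: "x \<in> carrier G \<Longrightarrow> \<delta> q (inv x) = inv (\<delta> q x)"
  by (cases "q = 0") (auto simp: d_zero group_hom.hom_inv[OF d_hom])

lemma V1_carrier: "p \<in> V1 G \<delta> \<Longrightarrow> p \<in> carrier G"
  unfolding V1_def by blast

lemma V1_add: "p \<in> V1 G \<delta> \<Longrightarrow> \<delta> (t + s) p = \<delta> t p \<otimes> \<delta> s p"
  unfolding V1_def by blast

lemma V1_d: "p \<in> V1 G \<delta> \<Longrightarrow> \<delta> q p \<in> V1 G \<delta>"
proof -
  assume p: "p \<in> V1 G \<delta>"
  have pc: "p \<in> carrier G" using p V1_carrier by blast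
  show ?thesis unfolding V1_def
  proof (intro CollectI conjI allI)
    fix t s
    show "\<delta> (t + s) (\<delta> q p) = \<delta> t (\<delta> q p) \<otimes> \<delta> s (\<delta> q p)"
      using pc V1_add[OF p, of "t * q" "s * q"] by (simp add: d_comp distrib_right)
  qed (use pc in simp)
qed

lemma V1_nat: "p \<in> V1 G \<delta> \<Longrightarrow> \<delta> (of_nat n) p = p [^] n"
proof (induction n)
  case 0 then show ?case using V1_carrier d_zero by simp
next
  case (Suc n)
  then show ?case using V1_add[OF Suc.prems, of "of_nat n" 1] V1_carrier by (simp add: add.commute)
qed

lemma V1_neg: "p \<in> V1 G \<delta> \<Longrightarrow> \<delta> (-1) p = inv p"
proof -
  assume p: "p \<in> V1 G \<delta>"
  have pc: "p \<in> carrier G" using p V1_carrier by blast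
  have "\<one> = p \<otimes> \<delta> (-1) p" using V1_add[OF p, of 1 "-1"] pc d_zero by simp
  then have "inv p \<otimes> \<one> = inv p \<otimes> (p \<otimes> \<delta> (-1) p)" by simp
  then show ?thesis using pc by simp
qed

lemma V1_inv: "p \<in> V1 G \<delta> \<Longrightarrow> inv p \<in> V1 G \<delta>"
proof -
  assume p: "p \<in> V1 G \<delta>"
  show ?thesis using V1_d[OF p, of "-1"] V1_neg[OF p] by simp
qed

lemma V1_int: "p \<in> V1 G \<delta> \<Longrightarrow> \<delta> (of_int n) p = p [^] n"
proof (cases "n \<ge> 0")
  case True
  assume p: "p \<in> V1 G \<delta>"
  have pc: "p \<in> carrier G" using p V1_carrier by blast
  have e: "n = int (nat n)" using True by simp
  have "\<delta> (of_int n) p = \<delta> (of_nat (nat n)) p" by (subst e) (simp only: of_int_of_nat_eq)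
  also have "\<dots> = p [^] (nat n)" using V1_nat[OF p] .
  also have "\<dots> = p [^] (int (nat n))" using pc by (simp only: int_pow_int)
  finally show ?thesis using e by simp
next
  case False
  assume p: "p \<in> V1 G \<delta>"
  have pc: "p \<in> carrier G" using p V1_carrier by blast
  define k where "k = nat (- n)"
  have k: "n = - int k" using False unfolding k_def by simp
  have "\<delta> (of_int n) p = \<delta> (of_nat k) (\<delta> (-1) p)" using pc k by (simp add: d_comp)
  also have "\<dots> = (inv p) [^] k" using V1_nat[OF V1_inv[OF p]] V1_neg[OF p] by simp
  also have "\<dots> = p [^] n" using k pc by (simp add: int_pow_neg_int nat_pow_inv)
  finally show ?thesis .
qed

end

locale qsg = qs + fixes Xg assumes genX: "generate G Xg = carrier G" and XV: "Xg \<subseteq> V1 G \<delta>"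
begin

lemma carrier_induct[consumes 1, case_names 1 2 3]:
  assumes g: "g \<in> carrier G" and one: "P \<one>" and v: "\<And>a. a \<in> V1 G \<delta> \<Longrightarrow> P a"
    and m: "\<And>g h. g \<in> carrier G \<Longrightarrow> h \<in> carrier G \<Longrightarrow> P g \<Longrightarrow> P h \<Longrightarrow> P (g \<otimes> h)"
  shows "P g"
proof -
  have XC: "Xg \<subseteq> carrier G" using XV V1_carrier by blast
  have "g \<in> generate G Xg" using g genX by simp
  then show ?thesis
  proof induction
    case (incl h) then show ?case using XV v by blast
  next
    case (inv h) then show ?case using XV v V1_inv by blast
  next
    case (eng h1 h2) then show ?case using m generate_in_carrier[OF XC] by blast
  qed (rule one)
qed

end


context qsg begin

lemma sub_nat_pow_closed: "subgroup H G \<Longrightarrow> h \<in> H \<Longrightarrow> h [^] (n::nat) \<in> H"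
  using subgroup_int_pow_closed[of H h "int n"] subgroup.mem_carrier[of H G h] by (simp add: int_pow_int)

lemma P1:
  assumes m: "0 < m" and w: "w \<in> carrier G"
  shows "lcs G 2 #> \<delta> (of_nat m) w = lcs G 2 #> (w [^] m)"
proof -
  define K where "K = lcs G 2"
  have K: "K \<lhd> G" unfolding K_def by (rule lcs_normal)
  interpret Q: group "G Mod K" using K normal.factorgroup_is_group by blast
  interpret pi: group_hom G "G Mod K" "\<lambda>a. K #> a" using mod_hom[OF K] .
  have cent: "\<And>y u. y \<in> carrier (G Mod K) \<Longrightarrow> u \<in> carrier G \<Longrightarrow>
      y \<otimes>\<^bsub>G Mod K\<^esub> (K #> u) = (K #> u) \<otimes>\<^bsub>G Mod K\<^esub> y"
    using mod_central[OF K] lcs_comm[of 1] unfolding K_def by (simp add: numeral_2_eq_2)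
  have "K #> \<delta> (of_nat m) w = K #> (w [^] m)"
    using w
  proof (induction rule: carrier_induct)
    case 1 then show ?case by simp
  next
    case (2 a) then show ?case using V1_nat by simp
  next
    case (3 g h)
    have "K #> \<delta> (of_nat m) (g \<otimes> h) = (K #> g) [^]\<^bsub>G Mod K\<^esub> m \<otimes>\<^bsub>G Mod K\<^esub> (K #> h) [^]\<^bsub>G Mod K\<^esub> m"
      using 3 by (simp add: d_mult pi.hom_nat_pow[symmetric])
    also have "\<dots> = ((K #> g) \<otimes>\<^bsub>G Mod K\<^esub> (K #> h)) [^]\<^bsub>G Mod K\<^esub> m"
      using 3 Q.pow_mult_distrib[OF cent[of "K #> g" h]] by simp
    also have "\<dots> = K #> ((g \<otimes> h) [^] m)" using 3 by (simp add: pi.hom_nat_pow)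
    finally show ?case .
  qed
  then show ?thesis unfolding K_def .
qed


end


context qsg begin

lemma Pstep:
  assumes k: "1 \<le> k" and m: "0 < m"
    and IH: "\<And>w. w \<in> lcs G k \<Longrightarrow> lcs G (Suc k) #> \<delta> (of_nat m) w = lcs G (Suc k) #> (w [^] (m ^ k))"
    and w: "w \<in> lcs G (Suc k)"
  shows "lcs G (Suc (Suc k)) #> \<delta> (of_nat m) w = lcs G (Suc (Suc k)) #> (w [^] (m ^ Suc k))"
proof -
  define K where "K = lcs G (Suc (Suc k))"
  define L where "L = lcs G (Suc k)"
  define N where "N = m ^ Suc k"
  define M where "M = m ^ k"
  define dm where "dm = \<delta> (of_nat m)"
  define Q where "Q = G Mod K"
  have K: "K \<lhd> G" unfolding K_def by (rule lcs_normal)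
  have LN: "L \<lhd> G" unfolding L_def by (rule lcs_normal)
  interpret Q: group Q using K normal.factorgroup_is_group unfolding Q_def by blast
  interpret pi: group_hom G Q "\<lambda>a. K #> a" using mod_hom[OF K] unfolding Q_def .
  interpret dm: group_hom G G dm using d_hom[of "of_nat m"] m unfolding dm_def by simp
  have Lsub: "subgroup L G" unfolding L_def by (rule lcs_subgroup)
  have kk: "subgroup (lcs G k) G" by (rule lcs_subgroup)
  have Lc: "\<And>u. u \<in> L \<Longrightarrow> u \<in> carrier G" unfolding L_def using lcs_carrier by blast
  have cent: "\<And>y u. y \<in> carrier Q \<Longrightarrow> u \<in> L \<Longrightarrow>
      y \<otimes>\<^bsub>Q\<^esub> (K #> u) = (K #> u) \<otimes>\<^bsub>Q\<^esub> y"
    using mod_central[OF K] lcs_comm[of "Suc k"] Lc unfolding K_def L_def Q_def by simp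
  have cmL: "\<And>g h. g \<in> carrier G \<Longrightarrow> h \<in> lcs G k \<Longrightarrow> commutator G g h \<in> L"
    using lcs_comm k unfolding L_def by blast
  have NM: "N = M * m" unfolding N_def M_def by simp
  have pcomm: "\<And>a b. a \<in> carrier G \<Longrightarrow> b \<in> carrier G \<Longrightarrow>
      K #> commutator G a b = commutator Q (K #> a) (K #> b)"
    using mod_comm[OF K] unfolding Q_def by blast
  have A: "K #> dm (commutator G g h) = (K #> commutator G g h) [^]\<^bsub>Q\<^esub> N"
    if h: "h \<in> lcs G k" and g: "g \<in> carrier G" for g h
    using g
  proof (induction rule: carrier_induct)
    case 1
    have hc: "h \<in> carrier G" using h lcs_carrier by blast
    then have "commutator G \<one> h = \<one>" by (simp add: comm_one_if)
    then show ?case by simp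
  next
    case (2 a)
    have ac: "a \<in> carrier G" using 2 V1_carrier by blast
    have hc: "h \<in> carrier G" using h lcs_carrier by blast
    have hM: "h [^] M \<in> lcs G k" using sub_nat_pow_closed[OF kk h] .
    define c where "c = dm h \<otimes> inv (h [^] M)"
    have cL: "c \<in> L" using IH[OF h] mod_eq_iff[OF LN] hc unfolding c_def L_def M_def dm_def by simp
    have cc: "c \<in> carrier G" using cL Lc by blast
    have dh: "dm h = c \<otimes> h [^] M" unfolding c_def using hc by (simp add: m_assoc)
    have da: "dm a = a [^] m" using V1_nat[OF 2] unfolding dm_def by simp
    define A where "A = K #> a"
    define H where "H = K #> h"
    define C where "C = K #> c"
    have AQ: "A \<in> carrier Q" "H \<in> carrier Q" "C \<in> carrier Q" unfolding A_def H_def C_def using ac hc cc by auto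
    have "K #> dm (commutator G a h) = K #> commutator G (a [^] m) (c \<otimes> h [^] M)"
      using ac hc by (simp add: hom_comm dm.group_hom_axioms da dh)
    also have "\<dots> = commutator Q (A [^]\<^bsub>Q\<^esub> m) (C \<otimes>\<^bsub>Q\<^esub> H [^]\<^bsub>Q\<^esub> M)"
      using ac hc cc by (simp add: pcomm pi.hom_nat_pow A_def H_def C_def)
    also have "\<dots> = commutator Q (A [^]\<^bsub>Q\<^esub> m) (H [^]\<^bsub>Q\<^esub> M)"
    proof (rule Q.comm_central_right)
      show "A [^]\<^bsub>Q\<^esub> m \<otimes>\<^bsub>Q\<^esub> C = C \<otimes>\<^bsub>Q\<^esub> A [^]\<^bsub>Q\<^esub> m"
        using cent[OF _ cL] AQ unfolding C_def by simp
      show "C \<otimes>\<^bsub>Q\<^esub> commutator Q (A [^]\<^bsub>Q\<^esub> m) (H [^]\<^bsub>Q\<^esub> M) =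
            commutator Q (A [^]\<^bsub>Q\<^esub> m) (H [^]\<^bsub>Q\<^esub> M) \<otimes>\<^bsub>Q\<^esub> C"
        using cent[OF _ cL] AQ Q.comm_closed unfolding C_def by simp
    qed (use AQ in auto)
    also have "\<dots> = commutator Q A (H [^]\<^bsub>Q\<^esub> M) [^]\<^bsub>Q\<^esub> m"
    proof (rule Q.comm_pow_left)
      have "commutator Q A (H [^]\<^bsub>Q\<^esub> M) = K #> commutator G a (h [^] M)"
        using ac hc by (simp add: pcomm pi.hom_nat_pow A_def H_def)
      then show "A \<otimes>\<^bsub>Q\<^esub> commutator Q A (H [^]\<^bsub>Q\<^esub> M) = commutator Q A (H [^]\<^bsub>Q\<^esub> M) \<otimes>\<^bsub>Q\<^esub> A"
        using cent[OF AQ(1) cmL[OF ac hM]] by simp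
    qed (use AQ in auto)
    also have "commutator Q A (H [^]\<^bsub>Q\<^esub> M) = commutator Q A H [^]\<^bsub>Q\<^esub> M"
    proof (rule Q.comm_pow_right)
      have "commutator Q A H = K #> commutator G a h"
        using ac hc by (simp add: pcomm A_def H_def)
      then show "H \<otimes>\<^bsub>Q\<^esub> commutator Q A H = commutator Q A H \<otimes>\<^bsub>Q\<^esub> H"
        using cent[OF AQ(2) cmL[OF ac h]] by simp
    qed (use AQ in auto)
    also have "(commutator Q A H [^]\<^bsub>Q\<^esub> M) [^]\<^bsub>Q\<^esub> m = commutator Q A H [^]\<^bsub>Q\<^esub> N"
      using AQ by (simp add: Q.nat_pow_pow NM)
    also have "commutator Q A H = K #> commutator G a h"
      using ac hc by (simp add: pcomm A_def H_def)
    finally show ?case .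
  next
    case (3 g1 g2)
    have hc: "h \<in> carrier G" using h lcs_carrier by blast
    define C1 where "C1 = K #> commutator G g1 h"
    define C2 where "C2 = K #> commutator G g2 h"
    define D1 where "D1 = K #> dm (commutator G g1 h)"
    define D2 where "D2 = K #> dm (commutator G g2 h)"
    have L1: "commutator G g1 h \<in> L" "commutator G g2 h \<in> L" using cmL 3 h by auto
    have L2: "dm (commutator G g2 h) \<in> L" using lcs_hom[OF dm.group_hom_axioms] L1 unfolding L_def by blast
    have QC: "C1 \<in> carrier Q" "C2 \<in> carrier Q" "D1 \<in> carrier Q" "D2 \<in> carrier Q"
      "K #> g1 \<in> carrier Q" "K #> dm g1 \<in> carrier Q"
      unfolding C1_def C2_def D1_def D2_def using 3 hc by auto
    have "K #> dm (commutator G (g1 \<otimes> g2) h)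
        = (K #> dm g1) \<otimes>\<^bsub>Q\<^esub> D2 \<otimes>\<^bsub>Q\<^esub> inv\<^bsub>Q\<^esub> (K #> dm g1) \<otimes>\<^bsub>Q\<^esub> D1"
      using 3 hc by (simp add: comm_mult_left D1_def D2_def)
    also have "(K #> dm g1) \<otimes>\<^bsub>Q\<^esub> D2 \<otimes>\<^bsub>Q\<^esub> inv\<^bsub>Q\<^esub> (K #> dm g1) = D2"
      using cent[OF QC(6) L2] QC unfolding D2_def by (intro Q.conj_comm) auto
    also have "D2 \<otimes>\<^bsub>Q\<^esub> D1 = C2 [^]\<^bsub>Q\<^esub> N \<otimes>\<^bsub>Q\<^esub> C1 [^]\<^bsub>Q\<^esub> N"
      using 3 unfolding D1_def D2_def C1_def C2_def by simp
    also have "\<dots> = (C2 \<otimes>\<^bsub>Q\<^esub> C1) [^]\<^bsub>Q\<^esub> N"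
      using Q.pow_mult_distrib[OF cent[OF QC(1) L1(2), symmetric]] QC unfolding C2_def by simp
    also have "C2 \<otimes>\<^bsub>Q\<^esub> C1 = (K #> g1) \<otimes>\<^bsub>Q\<^esub> C2 \<otimes>\<^bsub>Q\<^esub> inv\<^bsub>Q\<^esub> (K #> g1) \<otimes>\<^bsub>Q\<^esub> C1"
    proof -
      have "(K #> g1) \<otimes>\<^bsub>Q\<^esub> C2 \<otimes>\<^bsub>Q\<^esub> inv\<^bsub>Q\<^esub> (K #> g1) = C2"
        using Q.conj_comm[OF QC(5) QC(2)] cent[OF QC(5) L1(2)] unfolding C2_def by blast
      then show ?thesis by simp
    qed
    also have "\<dots> = K #> commutator G (g1 \<otimes> g2) h"
      using 3 hc by (simp add: comm_mult_left C1_def C2_def)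
    finally show ?case .
  qed
  define S where "S = {commutator G g h | g h. g \<in> carrier G \<and> h \<in> lcs G k}"
  have S: "S \<subseteq> carrier G" unfolding S_def using lcs_carrier by auto
  have LS: "L = generate G S" unfolding L_def S_def using lcs_Suc[OF k] .
  have "w \<in> generate G S" using w LS L_def by simp
  then have "K #> dm w = (K #> w) [^]\<^bsub>Q\<^esub> N"
  proof induction
    case one then show ?case by simp
  next
    case (incl t) then show ?case using A unfolding S_def by blast
  next
    case (inv t)
    have tc: "t \<in> carrier G" using inv S by blast
    have "K #> dm t = (K #> t) [^]\<^bsub>Q\<^esub> N" using inv A unfolding S_def by blast
    then show ?case using tc by (simp add: Q.nat_pow_inv)
  next
    case (eng t1 t2)
    have tc: "t1 \<in> carrier G" "t2 \<in> carrier G" using eng.hyps generate_in_carrier[OF S] by blast+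
    have t1L: "t1 \<in> L" using eng.hyps LS by simp
    have "K #> dm (t1 \<otimes> t2) = (K #> t1) [^]\<^bsub>Q\<^esub> N \<otimes>\<^bsub>Q\<^esub> (K #> t2) [^]\<^bsub>Q\<^esub> N"
      using tc eng.IH by simp
    also have "\<dots> = ((K #> t1) \<otimes>\<^bsub>Q\<^esub> (K #> t2)) [^]\<^bsub>Q\<^esub> N"
      using Q.pow_mult_distrib[OF cent[OF _ t1L, of "K #> t2", symmetric]] tc by simp
    finally show ?case using tc by simp
  qed
  moreover have "K #> (w [^] N) = (K #> w) [^]\<^bsub>Q\<^esub> N"
    using pi.hom_nat_pow[of w N] w lcs_carrier by blast
  ultimately have "K #> dm w = K #> (w [^] N)" by simp
  then show ?thesis unfolding K_def dm_def N_def .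
qed

end



context group begin
lemma comm_ipow_left:
  assumes g: "g \<in> carrier G" and h: "h \<in> carrier G"
    and c: "g \<otimes> commutator G g h = commutator G g h \<otimes> g"
  shows "commutator G (g [^] (n::int)) h = commutator G g h [^] n"
proof (cases "n \<ge> 0")
  case True
  then obtain k where k: "n = int k" by (metis nonneg_eq_int)
  show ?thesis using comm_pow_left[OF g h c, of k] g h by (simp add: k int_pow_int)
next
  case False
  define k where "k = nat (- n)"
  have k: "n = - int k" using False unfolding k_def by simp
  define c0 where "c0 = commutator G g h"
  have c0: "c0 \<in> carrier G" using g h unfolding c0_def by simp
  have ci: "commutator G (inv g) h = inv c0" using comm_inv_left[OF g h c] unfolding c0_def .
  have "inv (g \<otimes> c0) = inv (c0 \<otimes> g)" using c unfolding c0_def by simp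
  then have cc: "inv g \<otimes> inv c0 = inv c0 \<otimes> inv g" using g c0 by (simp add: inv_mult_group)
  have "g [^] n = inv g [^] k" using g k by (simp add: int_pow_neg_int nat_pow_inv)
  then have "commutator G (g [^] n) h = commutator G (inv g) h [^] k"
    using comm_pow_left[of "inv g" h k] g h cc ci by simp
  also have "\<dots> = c0 [^] n" using ci k c0 by (simp add: int_pow_neg_int nat_pow_inv)
  finally show ?thesis unfolding c0_def .
qed
end

context qsg begin

lemma Pall:
  assumes k: "1 \<le> k" and m: "0 < m" and w: "w \<in> lcs G k"
  shows "lcs G (Suc k) #> \<delta> (of_nat m) w = lcs G (Suc k) #> (w [^] (m ^ k))"
  using k w
proof (induction k arbitrary: w rule: nat_induct_at_least)
  case base
  then show ?case using P1[OF m, of w] by (simp add: numeral_2_eq_2)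
next
  case (Suc k)
  show ?case by (rule Pstep[OF Suc.hyps(1) m Suc.IH Suc.prems])
qed

end

locale qsn = qsg + fixes s :: nat assumes nil: "nilpotent_step G s"
begin

lemma s1: "1 \<le> s" using nil unfolding nilpotent_step_def by blast

lemma top_triv: "lcs G (Suc s) = {\<one>}" using nil unfolding nilpotent_step_def by blast

lemma S_sub: "subgroup (lcs G s) G" by (rule lcs_subgroup)

lemma S_carrier: "z \<in> lcs G s \<Longrightarrow> z \<in> carrier G" using lcs_carrier by blast

lemma top_pow: assumes m: "0 < m" and z: "z \<in> lcs G s"
  shows "\<delta> (of_nat m) z = z [^] (m ^ s)"
proof -
  have "{\<one>} #> \<delta> (of_nat m) z = {\<one>} #> (z [^] (m ^ s))"
    using Pall[OF s1 m z] top_triv by simp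
  then show ?thesis using S_carrier[OF z] by (simp add: r_coset_def)
qed

lemma top_central: assumes g: "g \<in> carrier G" and z: "z \<in> lcs G s"
  shows "g \<otimes> z = z \<otimes> g"
proof -
  have "commutator G g z \<in> lcs G (Suc s)" using lcs_comm[OF s1 g z] .
  then show ?thesis using comm_one_imp[OF g S_carrier[OF z]] top_triv by simp
qed

lemma S_comm_group: "comm_group (G\<lparr>carrier := lcs G s\<rparr>)"
proof -
  interpret H: group "G\<lparr>carrier := lcs G s\<rparr>"
    using subgroup.subgroup_is_group[OF S_sub is_group] .
  show ?thesis
    by (rule H.group_comm_groupI) (use top_central S_carrier in simp)
qed

lemma INJ:
  assumes t: "t \<in> lcs G s" and t': "t' \<in> lcs G s" and k: "(0::int) < k"
    and e: "t [^] k = t' [^] k"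
  shows "t = t'"
proof -
  define kn where "kn = nat k"
  have kk: "k = int kn" "0 < kn" using k unfolding kn_def by auto
  have tc: "t \<in> carrier G" "t' \<in> carrier G" using t t' S_carrier by auto
  have e2: "t [^] kn = t' [^] kn" using e tc by (simp add: kk int_pow_int)
  obtain s' where s': "s = Suc s'" using s1 by (cases s) auto
  have "\<delta> (of_nat kn) t = (t [^] kn) [^] (kn ^ s')" using top_pow[OF kk(2) t] tc
    by (simp add: s' nat_pow_pow)
  also have "\<dots> = (t' [^] kn) [^] (kn ^ s')" using e2 by simp
  also have "\<dots> = \<delta> (of_nat kn) t'" using top_pow[OF kk(2) t'] tc
    by (simp add: s' nat_pow_pow)
  finally show ?thesis using inj_onD[OF d_inj[of "of_nat kn"]] tc kk by simp
qed


lemma EX: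
  assumes z: "z \<in> lcs G s" and m: "(0::int) < m"
  shows "sigma_raw G \<delta> s n m z \<in> lcs G s \<and> sigma_raw G \<delta> s n m z [^] m = z [^] n"
proof -
  define mn where "mn = nat m"
  have mm: "m = int mn" "0 < mn" using m unfolding mn_def by auto
  have zc: "z \<in> carrier G" using z S_carrier by blast
  define y where "y = z [^] (n * m ^ (s - 1))"
  have yS: "y \<in> lcs G s" unfolding y_def using subgroup_int_pow_closed[OF S_sub z] .
  have yc: "y \<in> carrier G" using yS S_carrier by blast
  define u where "u = \<delta> (1 / of_int m) y"
  have uS: "u \<in> lcs G s" unfolding u_def using lcs_hom[OF d_hom yS] m by simp
  have uc: "u \<in> carrier G" using uS S_carrier by blast
  have du: "\<delta> (of_int m) u = y" unfolding u_def using yc m by (simp add: d_comp)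
  have sr: "sigma_raw G \<delta> s n m z = u"
    unfolding sigma_raw_def y_def[symmetric] du[symmetric]
    using inv_into_f_f[OF d_inj uc] m by simp
  obtain s' where s': "s = Suc s'" using s1 by (cases s) auto
  have "\<delta> (of_int m) u = u [^] (mn ^ s)" using top_pow[OF mm(2) uS] mm by simp
  also have "\<dots> = u [^] (m ^ s)" using uc mm by (simp add: int_pow_int[symmetric])
  also have "\<dots> = (u [^] m) [^] (m ^ s')" using uc by (simp add: int_pow_pow s')
  finally have e1: "(u [^] m) [^] (m ^ s') = (z [^] n) [^] (m ^ s')"
    using du zc by (simp add: y_def int_pow_pow s')
  have "u [^] m = z [^] n"
    by (rule INJ[OF subgroup_int_pow_closed[OF S_sub uS] subgroup_int_pow_closed[OF S_sub z] _ e1])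
       (use m in simp)
  then show ?thesis using sr uS by simp
qed

lemma RAW_EQ:
  assumes z: "z \<in> lcs G s" and u: "u \<in> lcs G s" and m: "(0::int) < m" and m0: "(0::int) < m0"
    and e: "u [^] m = z [^] n" and q: "(of_int n0 / of_int m0 :: rat) = of_int n / of_int m"
  shows "sigma_raw G \<delta> s n0 m0 z = u"
proof -
  define v where "v = sigma_raw G \<delta> s n0 m0 z"
  have v: "v \<in> lcs G s" "v [^] m0 = z [^] n0" using EX[OF z m0] unfolding v_def by auto
  have vc: "v \<in> carrier G" "u \<in> carrier G" "z \<in> carrier G" using v u z S_carrier by auto
  have nn: "n0 * m = n * m0" using q m m0
    by (simp add: frac_eq_eq) (metis of_int_eq_iff of_int_mult)
  have "v [^] (m0 * m) = z [^] (n0 * m)" using v vc by (simp add: int_pow_pow[symmetric])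
  also have "\<dots> = u [^] (m0 * m)" using e vc nn
    by (metis int_pow_pow mult.commute)
  finally have "v [^] (m0 * m) = u [^] (m0 * m)" .
  from INJ[OF v(1) u _ this] m m0 show ?thesis unfolding v_def by simp
qed

lemma WD:
  assumes z: "z \<in> lcs G s" and m: "(0::int) < m" and m': "0 < m'"
    and q: "(of_int n / of_int m :: rat) = of_int n' / of_int m'"
  shows "sigma_raw G \<delta> s n m z = sigma_raw G \<delta> s n' m' z"
  using RAW_EQ[OF z _ m' m _ q] EX[OF z m'] by blast

lemma SIG:
  assumes s2: "2 \<le> s" and z: "z \<in> lcs G s" and u: "u \<in> lcs G s" and m: "(0::int) < m"
    and q: "q = of_int n / of_int m" and e: "u [^] m = z [^] n"
  shows "sigma G \<delta> s q z = u"
proof -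
  obtain n0 m0 where qo: "quotient_of q = (n0, m0)" by (cases "quotient_of q") auto
  have m0: "0 < m0" using quotient_of_denom_pos[OF qo] .
  have q0: "q = of_int n0 / of_int m0" using quotient_of_div[OF qo] .
  have "sigma G \<delta> s q z = sigma_raw G \<delta> s n0 m0 z" using s2 qo unfolding sigma_def by simp
  also have "\<dots> = u" using RAW_EQ[OF z u m m0 e] q q0 by simp
  finally show ?thesis .
qed

lemma SIGmem:
  assumes s2: "2 \<le> s" and z: "z \<in> lcs G s"
  obtains n m where "0 < m" "q = of_int n / of_int m" "sigma G \<delta> s q z \<in> lcs G s"
     "sigma G \<delta> s q z [^] m = z [^] n"
proof -
  obtain n0 m0 where qo: "quotient_of q = (n0, m0)" by (cases "quotient_of q") auto
  have m0: "0 < m0" using quotient_of_denom_pos[OF qo] .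
  have q0: "q = of_int n0 / of_int m0" using quotient_of_div[OF qo] .
  have "sigma G \<delta> s q z = sigma_raw G \<delta> s n0 m0 z" using s2 qo unfolding sigma_def by simp
  then show ?thesis using that[OF m0 q0] EX[OF z m0] by simp
qed

end



context qsn begin

lemma SIGq:
  assumes s2: "2 \<le> s" and z: "z \<in> lcs G s" and qo: "quotient_of q = (n, m)"
  shows "0 < m" "q = of_int n / of_int m" "sigma G \<delta> s q z \<in> lcs G s"
     "sigma G \<delta> s q z [^] m = z [^] n"
proof -
  show m0: "0 < m" using quotient_of_denom_pos[OF qo] .
  show "q = of_int n / of_int m" using quotient_of_div[OF qo] .
  have "sigma G \<delta> s q z = sigma_raw G \<delta> s n m z" using s2 qo unfolding sigma_def by simp
  then show "sigma G \<delta> s q z \<in> lcs G s" "sigma G \<delta> s q z [^] m = z [^] n" using EX[OF z m0] by simp_all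
qed

lemma VS2:
  assumes s2: "2 \<le> s"
  shows "Q_vector_space_structure G (lcs G s) (sigma G \<delta> s)"
  unfolding Q_vector_space_structure_def
proof (intro conjI allI ballI)
  fix q z assume z: "z \<in> lcs G s"
  obtain n m where qo: "quotient_of q = (n, m)" by (cases "quotient_of q") auto
  show "sigma G \<delta> s q z \<in> lcs G s" using SIGq[OF s2 z qo] by blast
next
  fix q p z assume z: "z \<in> lcs G s"
  obtain np mp where po: "quotient_of p = (np, mp)" by (cases "quotient_of p") auto
  note P = SIGq[OF s2 z po]
  define u where "u = sigma G \<delta> s p z"
  have uS: "u \<in> lcs G s" using P(3) unfolding u_def .
  obtain nq mq where qo: "quotient_of q = (nq, mq)" by (cases "quotient_of q") auto
  note Q = SIGq[OF s2 uS qo]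
  define v where "v = sigma G \<delta> s q u"
  have vS: "v \<in> lcs G s" using Q(3) unfolding v_def .
  have c: "u \<in> carrier G" "v \<in> carrier G" "z \<in> carrier G" using uS vS z S_carrier by auto
  have "v [^] (mq * mp) = (u [^] nq) [^] mp" using Q(4) c by (simp add: v_def int_pow_pow[symmetric])
  also have "\<dots> = (u [^] mp) [^] nq" using c by (simp add: int_pow_pow mult.commute)
  also have "\<dots> = z [^] (nq * np)" using P(4) c by (simp add: u_def int_pow_pow mult.commute)
  finally have e: "v [^] (mq * mp) = z [^] (nq * np)" .
  have qp: "q * p = of_int (nq * np) / of_int (mq * mp)" using P(2) Q(2) by simp
  have "sigma G \<delta> s (q * p) z = v"
    using SIG[OF s2 z vS _ qp e] P(1) Q(1) by simp
  then show "sigma G \<delta> s q (sigma G \<delta> s p z) = sigma G \<delta> s (q * p) z" unfolding v_def u_def by simp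
next
  fix q p z assume z: "z \<in> lcs G s"
  obtain np mp where po: "quotient_of p = (np, mp)" by (cases "quotient_of p") auto
  obtain nq mq where qo: "quotient_of q = (nq, mq)" by (cases "quotient_of q") auto
  note P = SIGq[OF s2 z po] and Q = SIGq[OF s2 z qo]
  define u where "u = sigma G \<delta> s q z"
  define v where "v = sigma G \<delta> s p z"
  have uS: "u \<in> lcs G s" "v \<in> lcs G s" using P(3) Q(3) unfolding u_def v_def by auto
  have c: "u \<in> carrier G" "v \<in> carrier G" "z \<in> carrier G" using uS z S_carrier by auto
  have uvS: "u \<otimes> v \<in> lcs G s" using uS subgroup.m_closed[OF S_sub] by blast
  have e1: "u [^] (mq * mp) = z [^] (nq * mp)"
  proof -
    have "u [^] (mq * mp) = (u [^] mq) [^] mp" using c by (simp add: int_pow_pow)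
    also have "\<dots> = z [^] (nq * mp)" using Q(4) c by (simp add: u_def int_pow_pow)
    finally show ?thesis .
  qed
  have e2: "v [^] (mq * mp) = z [^] (np * mq)"
  proof -
    have "v [^] (mq * mp) = (v [^] mp) [^] mq" using c by (simp add: int_pow_pow mult.commute)
    also have "\<dots> = z [^] (np * mq)" using P(4) c by (simp add: v_def int_pow_pow)
    finally show ?thesis .
  qed
  have "(u \<otimes> v) [^] (mq * mp) = u [^] (mq * mp) \<otimes> v [^] (mq * mp)"
    using int_pow_mult_distrib[OF top_central[OF c(1) uS(2)] c(1,2)] .
  also have "\<dots> = z [^] (nq * mp) \<otimes> z [^] (np * mq)" using e1 e2 by simp
  also have "\<dots> = z [^] (nq * mp + np * mq)" using c(3) by (rule int_pow_mult[symmetric])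
  finally have e: "(u \<otimes> v) [^] (mq * mp) = z [^] (nq * mp + np * mq)" .
  have qp: "q + p = of_int (nq * mp + np * mq) / of_int (mq * mp)"
    using P(1,2) Q(1,2) by (simp add: field_simps)
  have "sigma G \<delta> s (q + p) z = u \<otimes> v"
    using SIG[OF s2 z uvS _ qp e] P(1) Q(1) by simp
  then show "sigma G \<delta> s q z \<otimes> sigma G \<delta> s p z = sigma G \<delta> s (q + p) z"
    unfolding u_def v_def by simp
next
  fix z assume z: "z \<in> lcs G s"
  show "sigma G \<delta> s 1 z = z" using SIG[OF s2 z z, of 1 1] S_carrier[OF z] by simp
next
  fix q g h assume g: "g \<in> lcs G s" and h: "h \<in> lcs G s"
  obtain n m where qo: "quotient_of q = (n, m)" by (cases "quotient_of q") auto
  note P = SIGq[OF s2 g qo] and Q = SIGq[OF s2 h qo]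
  define u where "u = sigma G \<delta> s q g"
  define v where "v = sigma G \<delta> s q h"
  have uS: "u \<in> lcs G s" "v \<in> lcs G s" using P(3) Q(3) unfolding u_def v_def by auto
  have c: "u \<in> carrier G" "v \<in> carrier G" "g \<in> carrier G" "h \<in> carrier G"
    using uS g h S_carrier by auto
  have uvS: "u \<otimes> v \<in> lcs G s" "g \<otimes> h \<in> lcs G s" using uS g h subgroup.m_closed[OF S_sub] by blast+
  have "(u \<otimes> v) [^] m = u [^] m \<otimes> v [^] m"
    using int_pow_mult_distrib[OF top_central[OF c(1) uS(2)] c(1,2)] .
  also have "\<dots> = g [^] n \<otimes> h [^] n" using P(4) Q(4) unfolding u_def v_def by simp
  also have "\<dots> = (g \<otimes> h) [^] n"
    using int_pow_mult_distrib[OF top_central[OF c(3) h] c(3,4)] by simp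
  finally have e: "(u \<otimes> v) [^] m = (g \<otimes> h) [^] n" .
  have "sigma G \<delta> s q (g \<otimes> h) = u \<otimes> v" using SIG[OF s2 uvS(2) uvS(1) P(1) P(2) e] .
  then show "sigma G \<delta> s q g \<otimes> sigma G \<delta> s q h = sigma G \<delta> s q (g \<otimes> h)"
    unfolding u_def v_def by simp
qed

lemma LP:
  assumes s2: "2 \<le> s" and y: "y \<in> V1 G \<delta>" and w: "w \<in> lcs G (s - 1)"
    and zS: "commutator G y w \<in> lcs G s"
  shows "sigma G \<delta> s q (commutator G y w) = commutator G (\<delta> q y) w"
proof -
  obtain n m where qo: "quotient_of q = (n, m)" by (cases "quotient_of q") auto
  have m: "0 < m" using quotient_of_denom_pos[OF qo] .
  have q: "q = of_int n / of_int m" using quotient_of_div[OF qo] .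
  have yc: "y \<in> carrier G" using y V1_carrier by blast
  have wc: "w \<in> carrier G" using w lcs_carrier by blast
  have dy: "\<delta> q y \<in> V1 G \<delta>" using V1_d[OF y] .
  have dyc: "\<delta> q y \<in> carrier G" using yc by simp
  define u where "u = commutator G (\<delta> q y) w"
  have ss: "Suc (s - 1) = s" "1 \<le> s - 1" using s2 by auto
  have uS: "u \<in> lcs G s" unfolding u_def using lcs_comm[OF ss(2) dyc w] ss(1) by simp
  define mn where "mn = nat m"
  have mm: "m = int mn" using m unfolding mn_def by simp
  have "u [^] m = u [^] mn" using uS S_carrier by (simp add: mm int_pow_int)
  also have "\<dots> = commutator G ((\<delta> q y) [^] mn) w"
    using comm_pow_left[OF dyc wc top_central[OF dyc uS[unfolded u_def]]] unfolding u_def by simp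
  also have "(\<delta> q y) [^] mn = \<delta> (of_nat mn) (\<delta> q y)" using V1_nat[OF dy] by simp
  also have "\<dots> = \<delta> (of_int n) y"
    using d_comp[OF yc] m by (simp add: q mm)
  also have "\<dots> = y [^] n" using V1_int[OF y] .
  also have "commutator G (y [^] n) w = commutator G y w [^] n"
    using comm_ipow_left[OF yc wc top_central[OF yc zS]] .
  finally have e: "u [^] m = commutator G y w [^] n" .
  show ?thesis using SIG[OF s2 zS uS m q e] unfolding u_def .
qed

lemma VS1:
  assumes s1: "s = 1"
  shows "Q_vector_space_structure G (lcs G s) (sigma G \<delta> s)"
proof -
  have Sc: "lcs G s = carrier G" using s1 by simp
  have sg: "sigma G \<delta> s = \<delta>" using s1 unfolding sigma_def by (simp add: fun_eq_iff)
  interpret cg: comm_group G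
    by (rule group_comm_groupI) (use top_central Sc in auto)
  have V: "g \<in> V1 G \<delta>" if g: "g \<in> carrier G" for g
    using g
  proof (induction rule: carrier_induct)
    case 1 then show ?case unfolding V1_def by simp
  next
    case (2 a) then show ?case .
  next
    case (3 g h)
    show ?case unfolding V1_def
    proof (intro CollectI conjI allI)
      fix t r
      show "\<delta> (t + r) (g \<otimes> h) = \<delta> t (g \<otimes> h) \<otimes> \<delta> r (g \<otimes> h)"
        using 3 by (simp add: d_mult V1_add cg.m_ac)
    qed (use 3 in simp)
  qed
  show ?thesis unfolding Q_vector_space_structure_def Sc sg
    using d_comp V V1_add d_mult by (auto simp: Sc)
qed

end

theorem main_aux:
  fixes G :: "('a, 'b) monoid_scheme" and \<delta> :: "rat \<Rightarrow> 'a \<Rightarrow> 'a"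
    and s r :: nat and x :: "nat \<Rightarrow> 'a"
  assumes "Q_scalable G \<delta>"
    and "nilpotent_step G s"
    and "\<forall>i \<in> {1..r}. x i \<in> V1 G \<delta>"
    and "generate G {\<delta> q (x i) | q i. i \<in> {1..r}} = carrier G"
  shows "comm_group (G\<lparr>carrier := lcs G s\<rparr>)
    \<and> (s \<ge> 2 \<longrightarrow> (\<forall>n m n' m'. \<forall>z \<in> lcs G s. m > 0 \<longrightarrow> m' > 0
          \<longrightarrow> (of_int n / of_int m :: rat) = of_int n' / of_int m'
          \<longrightarrow> sigma_raw G \<delta> s n m z = sigma_raw G \<delta> s n' m' z))
    \<and> Q_vector_space_structure G (lcs G s) (sigma G \<delta> s)
    \<and> (s \<ge> 2 \<longrightarrow> (\<forall>y \<in> V1 G \<delta>. \<forall>w \<in> lcs G (s - 1).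
          commutator G y w \<in> lcs G s \<longrightarrow>
          (\<forall>q. sigma G \<delta> s q (commutator G y w) = commutator G (\<delta> q y) w)))"
proof -
  have gG: "group G" using assms(1) unfolding Q_scalable_def by blast
  interpret qs G \<delta> by (rule qs.intro[OF gG]) (rule qs_axioms.intro[OF assms(1)])
  interpret qsn G \<delta> "{\<delta> q (x i) | q i. i \<in> {1..r}}" s
  proof (unfold_locales)
    show "generate G {\<delta> q (x i) | q i. i \<in> {1..r}} = carrier G" by (rule assms(4))
    show "{\<delta> q (x i) | q i. i \<in> {1..r}} \<subseteq> V1 G \<delta>" using assms(3) V1_d by blast
    show "nilpotent_step G s" by (rule assms(2))
  qed
  show ?thesis
  proof (intro conjI impI allI ballI)
    show "comm_group (G\<lparr>carrier := lcs G s\<rparr>)" by (rule S_comm_group)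
  next
    fix n m n' m' :: int and z assume "z \<in> lcs G s" "0 < m" "0 < m'"
      "(of_int n / of_int m :: rat) = of_int n' / of_int m'"
    then show "sigma_raw G \<delta> s n m z = sigma_raw G \<delta> s n' m' z" by (rule WD)
  next
    show "Q_vector_space_structure G (lcs G s) (sigma G \<delta> s)"
      using VS1 VS2 s1 by (cases "s = 1") auto
  next
    fix y w q assume "2 \<le> s" "y \<in> V1 G \<delta>" "w \<in> lcs G (s - 1)" "commutator G y w \<in> lcs G s"
    then show "sigma G \<delta> s q (commutator G y w) = commutator G (\<delta> q y) w" by (rule LP)
  qed
qed



theorem mainTheorem5:
  fixes G :: "('a, 'b) monoid_scheme" and \<delta> :: "rat \<Rightarrow> 'a \<Rightarrow> 'a"
    and s r :: nat and x :: "nat \<Rightarrow> 'a"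
  assumes "Q_scalable G \<delta>"
    and "nilpotent_step G s"
    and "\<forall>i \<in> {1..r}. x i \<in> V1 G \<delta>"
    and "generate G {\<delta> q (x i) | q i. i \<in> {1..r}} = carrier G"
  shows "comm_group (G\<lparr>carrier := lcs G s\<rparr>)
    \<and> (s \<ge> 2 \<longrightarrow> (\<forall>n m n' m'. \<forall>z \<in> lcs G s. m > 0 \<longrightarrow> m' > 0
          \<longrightarrow> (of_int n / of_int m :: rat) = of_int n' / of_int m'
          \<longrightarrow> sigma_raw G \<delta> s n m z = sigma_raw G \<delta> s n' m' z))
    \<and> Q_vector_space_structure G (lcs G s) (sigma G \<delta> s)
    \<and> (s \<ge> 2 \<longrightarrow> (\<forall>y \<in> V1 G \<delta>. \<forall>w \<in> lcs G (s - 1).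
          commutator G y w \<in> lcs G s \<longrightarrow>
          (\<forall>q. sigma G \<delta> s q (commutator G y w) = commutator G (\<delta> q y) w)))"
  using assms by (rule main_aux)

end
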